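(* Let $\Omega$ be the closure of a bounded domain in $\mathbb{R}^d$, let $X$ be a Banach space of functions on $\Omega$ with $C(\Omega)\subset X$ and $\|g\|_X\le C_X\|g\|_{C(\Omega)}$ for all $g\in C(\Omega)$, let $K$ be a compact subset of $C(\Omega)$, let ${\bf x}=(x_1,\dots,x_m)\in\Omega^m$ and $w\in\mathbb{R}^m$. Then $$\lim_{\varepsilon\to0^+}R(K(w,\varepsilon))_X=R(K_w)_X .$$
   Context: $\lambda_{\bf x}(g):=(g(x_1),\dots,g(x_m))$ for $g\in C(\Omega)$; on $\mathbb{R}^m$, $\|v\|:=\big[\frac1m\sum_{j=1}^m|v_j|^2\big]^{1/2}$. $K_{w'}:=\{h\in K:\lambda_{\bf x}(h)=w'\}$, $K(w,\varepsilon):=\bigcup_{w'\in\mathbb{R}^m,\ \|w'-w\|\le\varepsilon}K_{w'}$. For $S\subset X$, $R(S)_X:=\inf\{r:\ S\subset B(z,r)_X\text{ for some }z\in X\}$ (Chebyshev radius in $X$). *)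

theory Defs
  imports "HOL-Analysis.Analysis"
begin

text \<open>C(Omega): continuous real functions on Omega (extensional to Omega), with the sup metric.\<close>
definition Cmetric :: "'a::topological_space set \<Rightarrow> ('a \<Rightarrow> real) metric" where
  "Cmetric \<Omega> = cfunspace (top_of_set \<Omega>) (euclidean_metric :: real metric)"

definition Cfun :: "'a::topological_space set \<Rightarrow> ('a \<Rightarrow> real) set" where
  "Cfun \<Omega> = mspace (Cmetric \<Omega>)"

definition supnorm :: "'a set \<Rightarrow> ('a \<Rightarrow> real) \<Rightarrow> real" where
  "supnorm \<Omega> g = (SUP x\<in>\<Omega>. \<bar>g x\<bar>)"

text \<open>lambda_x(g) = (g(x_1),...,g(x_m)), with the index set {1..m} rendered as a finite type 'm.\<close>
definition sample :: "('m::finite \<Rightarrow> 'd) \<Rightarrow> ('d \<Rightarrow> real) \<Rightarrow> real ^ 'm" where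
  "sample x g = (\<chi> j. g (x j))"

definition rms_norm :: "real ^ 'm::finite \<Rightarrow> real" where
  "rms_norm v = sqrt ((1 / real CARD('m)) * (\<Sum>j\<in>UNIV. \<bar>v $ j\<bar>^2))"

definition Kfib :: "('d \<Rightarrow> real) set \<Rightarrow> ('m::finite \<Rightarrow> 'd) \<Rightarrow> real ^ 'm \<Rightarrow> ('d \<Rightarrow> real) set" where
  "Kfib K x w' = {h \<in> K. sample x h = w'}"

definition Knbhd :: "('d \<Rightarrow> real) set \<Rightarrow> ('m::finite \<Rightarrow> 'd) \<Rightarrow> real ^ 'm \<Rightarrow> real \<Rightarrow> ('d \<Rightarrow> real) set" where
  "Knbhd K x w \<epsilon> = (\<Union>w'\<in>{w'. rms_norm (w' - w) \<le> \<epsilon>}. Kfib K x w')"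

definition cheb_radius :: "'b::real_normed_vector set \<Rightarrow> real" where
  "cheb_radius S = Inf {r. \<exists>z. S \<subseteq> ball z r}"

end

theory Submission imports Defs begin

lemma cheb_nonempty_bdd:
  fixes S :: "'b::real_normed_vector set"
  assumes "S \<noteq> {}"
  shows "bdd_below {r. \<exists>z. S \<subseteq> ball z r}"
proof -
  obtain s where s: "s \<in> S" using assms by blast
  have "0 \<le> r" if rr: "r \<in> {r. \<exists>z. S \<subseteq> ball z r}" for r
  proof -
    obtain z where "S \<subseteq> ball z r" using rr by blast
    then have "dist z s < r" using s by (meson mem_ball subsetD)
    then show ?thesis using zero_le_dist[of z s] by linarith
  qed
  then show ?thesis by (meson bdd_below.I)
qed

lemma cheb_le:
  fixes S :: "'b::real_normed_vector set"
  assumes "S \<noteq> {}" "S \<subseteq> ball z r"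
  shows "cheb_radius S \<le> r"
proof -
  have "r \<in> {r. \<exists>z. S \<subseteq> ball z r}" using assms(2) by blast
  then show ?thesis unfolding cheb_radius_def
    by (rule cInf_lower[OF _ cheb_nonempty_bdd[OF assms(1)]])
qed

lemma cheb_mono:
  fixes S :: "'b::real_normed_vector set"
  assumes "S \<noteq> {}" "bounded T" "S \<subseteq> T"
  shows "cheb_radius S \<le> cheb_radius T"
proof -
  obtain B where "T \<subseteq> ball 0 B" using assms(2) bounded_subset_ballD by blast
  then have ne: "{r. \<exists>z. T \<subseteq> ball z r} \<noteq> {}" by blast
  show ?thesis unfolding cheb_radius_def
  proof (rule cInf_superset_mono[OF ne cheb_nonempty_bdd[OF assms(1)]])
    show "{r. \<exists>z. T \<subseteq> ball z r} \<subseteq> {r. \<exists>z. S \<subseteq> ball z r}"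
      using assms(3) by (auto intro: order_trans)
  qed
qed

lemma cheb_lt:
  fixes S :: "'b::real_normed_vector set"
  assumes "S \<noteq> {}" "bounded S" "cheb_radius S < r"
  shows "\<exists>z. S \<subseteq> ball z r"
proof -
  obtain B where "S \<subseteq> ball 0 B" using assms(2) bounded_subset_ballD by blast
  then have ne: "{r. \<exists>z. S \<subseteq> ball z r} \<noteq> {}" by blast
  from cInf_lessD[OF ne assms(3)[unfolded cheb_radius_def]] obtain r' z
    where zr: "S \<subseteq> ball z r'" "r' < r" by blast
  have "ball z r' \<subseteq> ball z r" by (rule subset_ball) (use zr(2) in simp)
  then show ?thesis using zr(1) by blast
qed

lemma keyG:
  assumes K: "compactin X K"
    and phi: "continuous_map (subtopology X K) euclideanreal \<phi>"
    and psi: "continuous_map (subtopology X K) euclideanreal \<psi>"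
    and zero: "\<And>h. h \<in> K \<Longrightarrow> \<phi> h \<le> 0 \<Longrightarrow> \<psi> h < c"
  shows "\<exists>e>0. \<forall>h\<in>K. \<phi> h < e \<longrightarrow> \<psi> h < c"
proof -
  have KX: "K \<subseteq> topspace X" using K compactin_subset_topspace by blast
  have top: "topspace (subtopology X K) = K" using KX by auto
  define K' where "K' = {h \<in> topspace (subtopology X K). \<psi> h \<in> {c..}}"
  have cl: "closedin (subtopology X K) K'"
    unfolding K'_def by (rule closedin_continuous_map_preimage[OF psi]) auto
  have cK: "compactin (subtopology X K) K" using K KX by (simp add: compactin_subtopology)
  have cK': "compactin (subtopology X K) K'"
    by (rule closed_compactin[OF cK _ cl]) (auto simp: K'_def top)
  show ?thesis
  proof (cases "K' = {}")
    case True
    then show ?thesis unfolding K'_def top by (intro exI[of _ 1]) force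
  next
    case False
    have "compact (\<phi> ` K')" using image_compactin[OF cK' phi] by simp
    then obtain m where m: "m \<in> K'" "\<And>h. h \<in> K' \<Longrightarrow> \<phi> m \<le> \<phi> h"
      using compact_attains_inf[of "\<phi> ` K'"] False by auto
    have "m \<in> K" "c \<le> \<psi> m" using m(1) top by (auto simp: K'_def)
    then have pos: "\<phi> m > 0" using zero by force
    show ?thesis
    proof (intro exI[of _ "\<phi> m"] conjI pos ballI impI)
      fix h assume "h \<in> K" "\<phi> h < \<phi> m"
      then show "\<psi> h < c" using m(2)[of h] top by (force simp: K'_def)
    qed
  qed
qed

lemma lip_cont:
  fixes F :: "'a \<Rightarrow> 'c::metric_space"
  assumes "K \<subseteq> mspace M"
    and "\<And>f g. f \<in> K \<Longrightarrow> g \<in> K \<Longrightarrow> dist (F f) (F g) \<le> B * mdist M f g"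
  shows "continuous_map (subtopology (mtopology_of M) K) euclidean F"
proof -
  have "Lipschitz_continuous_map (submetric M K) euclidean_metric F"
    unfolding Lipschitz_continuous_map_def using assms by auto
  from Lipschitz_continuous_imp_continuous_map[OF this] show ?thesis
    by (simp add: mtopology_of_submetric)
qed

lemma rms_norm_eq: "rms_norm (v :: real ^ 'm::finite) = norm v / sqrt (real CARD('m))"
proof -
  have "norm v = sqrt (\<Sum>j\<in>UNIV. \<bar>v $ j\<bar>^2)"
    unfolding norm_vec_def L2_set_def real_norm_def ..
  moreover have "rms_norm v = sqrt (1 / real CARD('m)) * sqrt (\<Sum>j\<in>UNIV. \<bar>v $ j\<bar>^2)"
    unfolding rms_norm_def by (rule real_sqrt_mult)
  moreover have "sqrt (1 / real CARD('m)) = 1 / sqrt (real CARD('m))"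
    by (rule real_sqrt_divide[where x=1, simplified])
  ultimately show ?thesis by simp
qed

theorem lemma4p3:
  fixes D \<Omega> :: "'d::euclidean_space set"
    and J :: "('d \<Rightarrow> real) \<Rightarrow> 'b::banach"
    and CX :: real
    and K :: "('d \<Rightarrow> real) set"
    and x :: "'m::finite \<Rightarrow> 'd"
    and w :: "real ^ 'm"
  assumes "open D" and "connected D" and "bounded D" and "D \<noteq> {}"
    and "\<Omega> = closure D"
    and J_lin: "\<And>f g c. f \<in> Cfun \<Omega> \<Longrightarrow> g \<in> Cfun \<Omega> \<Longrightarrow>
                 J (restrict (\<lambda>y. f y + c * g y) \<Omega>) = J f + c *\<^sub>R J g"
    and J_inj: "inj_on J (Cfun \<Omega>)"
    and J_bound: "\<And>g. g \<in> Cfun \<Omega> \<Longrightarrow> norm (J g) \<le> CX * supnorm \<Omega> g"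
    and "K \<subseteq> Cfun \<Omega>"
    and "compactin (mtopology_of (Cmetric \<Omega>)) K"
    and "\<And>j. x j \<in> \<Omega>"
  shows "((\<lambda>\<epsilon>. cheb_radius (J ` Knbhd K x w \<epsilon>)) \<longlongrightarrow> cheb_radius (J ` Kfib K x w))
           (at_right 0)"
proof -
  let ?M = "Cmetric \<Omega>"
  let ?n = "real CARD('m)"
  have \<Omega>ne: "\<Omega> \<noteq> {}" using assms(4,5) closure_subset by blast
  have msp: "mspace ?M = Cfun \<Omega>" by (simp add: Cfun_def)
  have pt: "\<bar>f y - g y\<bar> \<le> mdist ?M f g" if "f \<in> Cfun \<Omega>" "g \<in> Cfun \<Omega>" "y \<in> \<Omega>" for f g y
    using mdist_cfunspace_imp_mdist_le[of f "top_of_set \<Omega>" euclidean_metric g "mdist ?M f g" y] that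
    by (simp add: Cmetric_def Cfun_def dist_real_def)
  have Cfun_iff: "f \<in> Cfun \<Omega> \<longleftrightarrow> f \<in> extensional \<Omega> \<and> bounded (f ` \<Omega>) \<and>
      continuous_map (top_of_set \<Omega>) euclidean f" for f
    by (simp add: Cfun_def Cmetric_def)
  have diffC: "restrict (\<lambda>y. f y + (-1) * g y) \<Omega> \<in> Cfun \<Omega>"
    if f: "f \<in> Cfun \<Omega>" and g: "g \<in> Cfun \<Omega>" for f g
  proof -
    have "continuous_map (top_of_set \<Omega>) euclidean (\<lambda>y. f y - g y)"
      using f g Cfun_iff by (intro continuous_map_diff) auto
    then have c: "continuous_map (top_of_set \<Omega>) euclidean (restrict (\<lambda>y. f y + (-1) * g y) \<Omega>)"
      by (rule continuous_map_eq) auto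
    have "bounded (f ` \<Omega>)" "bounded (g ` \<Omega>)" using f g Cfun_iff by blast+
    then obtain a b where "\<forall>z\<in>f ` \<Omega>. norm z \<le> a" "\<forall>z\<in>g ` \<Omega>. norm z \<le> b"
      unfolding bounded_iff by blast
    then have a: "\<And>y. y \<in> \<Omega> \<Longrightarrow> norm (f y) \<le> a" and b: "\<And>y. y \<in> \<Omega> \<Longrightarrow> norm (g y) \<le> b"
      by auto
    have "\<forall>z\<in>restrict (\<lambda>y. f y + (-1) * g y) \<Omega> ` \<Omega>. norm z \<le> a + b"
    proof
      fix z assume "z \<in> restrict (\<lambda>y. f y + (-1) * g y) \<Omega> ` \<Omega>"
      then obtain y where y: "y \<in> \<Omega>" "z = f y - g y" by auto
      have "norm z \<le> norm (f y) + norm (g y)" using y(2) norm_triangle_ineq4 by blast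
      then show "norm z \<le> a + b" using a[OF y(1)] b[OF y(1)] by linarith
    qed
    then have "bounded (restrict (\<lambda>y. f y + (-1) * g y) \<Omega> ` \<Omega>)"
      unfolding bounded_iff by blast
    with c show ?thesis unfolding Cfun_iff by simp
  qed
  have Jd: "dist (J f) (J g) \<le> \<bar>CX\<bar> * mdist ?M f g"
    if f: "f \<in> Cfun \<Omega>" and g: "g \<in> Cfun \<Omega>" for f g
  proof -
    let ?h = "restrict (\<lambda>y. f y + (-1) * g y) \<Omega>"
    have eq: "J ?h = J f - J g" using J_lin[OF f g, of "-1"] by simp
    have s: "supnorm \<Omega> ?h = (SUP y\<in>\<Omega>. \<bar>f y - g y\<bar>)"
      unfolding supnorm_def by (rule SUP_cong) auto
    have bdd: "bdd_above ((\<lambda>y. \<bar>f y - g y\<bar>) ` \<Omega>)"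
      using pt[OF f g] by (meson bdd_above.I2)
    have s1: "supnorm \<Omega> ?h \<le> mdist ?M f g"
      unfolding s by (rule cSUP_least[OF \<Omega>ne]) (use pt[OF f g] in auto)
    obtain y0 where y0: "y0 \<in> \<Omega>" using \<Omega>ne by blast
    have "\<bar>f y0 - g y0\<bar> \<le> supnorm \<Omega> ?h"
      unfolding s by (rule cSUP_upper[OF y0 bdd])
    then have s0: "0 \<le> supnorm \<Omega> ?h" by linarith
    have "norm (J ?h) \<le> CX * supnorm \<Omega> ?h" using J_bound[OF diffC[OF f g]] .
    also have "\<dots> \<le> \<bar>CX\<bar> * supnorm \<Omega> ?h" using s0 by (simp add: mult_right_mono)
    also have "\<dots> \<le> \<bar>CX\<bar> * mdist ?M f g" using s1 by (simp add: mult_left_mono)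
    finally show ?thesis using eq by (simp add: dist_norm)
  qed
  define \<phi> where "\<phi> h = norm (sample x h - w)" for h
  have \<phi>L: "dist (\<phi> f) (\<phi> g) \<le> ?n * mdist ?M f g"
    if f: "f \<in> Cfun \<Omega>" and g: "g \<in> Cfun \<Omega>" for f g
  proof -
    have "dist (\<phi> f) (\<phi> g) \<le> norm ((sample x f - w) - (sample x g - w))"
      unfolding \<phi>_def dist_real_def by (rule norm_triangle_ineq3)
    also have "\<dots> = norm (sample x f - sample x g)" by simp
    also have "\<dots> \<le> (\<Sum>j\<in>UNIV. \<bar>(sample x f - sample x g) $ j\<bar>)" by (rule norm_le_l1_cart)
    also have "\<dots> = (\<Sum>j\<in>UNIV. \<bar>f (x j) - g (x j)\<bar>)" by (simp add: sample_def)
    also have "\<dots> \<le> (\<Sum>j\<in>(UNIV::'m set). mdist ?M f g)"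
      by (rule sum_mono) (use pt[OF f g] assms(11) in auto)
    also have "\<dots> = ?n * mdist ?M f g" by simp
    finally show ?thesis .
  qed
  have Kcpt: "compactin (mtopology_of ?M) K" using assms(10) .
  have KM: "K \<subseteq> mspace ?M" using assms(9) msp by simp
  have \<phi>c: "continuous_map (subtopology (mtopology_of ?M) K) euclidean \<phi>"
    by (rule lip_cont[OF KM]) (use \<phi>L assms(9) in blast)
  have Jc: "continuous_map (subtopology (mtopology_of ?M) K) euclidean J"
    by (rule lip_cont[OF KM]) (use Jd assms(9) in blast)
  have KK: "compactin (subtopology (mtopology_of ?M) K) K"
    using Kcpt compactin_subtopology by blast
  have bJK: "bounded (J ` K)"
    using image_compactin[OF KK Jc] by (simp add: compact_imp_bounded)
  have sn: "sqrt ?n > 0" by simp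
  have nb: "h \<in> Knbhd K x w \<epsilon> \<longleftrightarrow> h \<in> K \<and> \<phi> h / sqrt ?n \<le> \<epsilon>" for h \<epsilon>
    by (auto simp: Knbhd_def Kfib_def \<phi>_def rms_norm_eq)
  have fb: "h \<in> Kfib K x w \<longleftrightarrow> h \<in> K \<and> \<phi> h \<le> 0" for h
    by (auto simp: Kfib_def \<phi>_def)
  have sub: "Kfib K x w \<subseteq> Knbhd K x w \<epsilon>" if "\<epsilon> \<ge> 0" for \<epsilon>
    using that nb fb by (auto simp: \<phi>_def)
  have subK: "Knbhd K x w \<epsilon> \<subseteq> K" for \<epsilon> using nb by blast
  have small: "eventually (\<lambda>\<epsilon>. \<forall>h\<in>Knbhd K x w \<epsilon>. P h) (at_right 0)"
    if e: "e > 0" and P: "\<forall>h\<in>K. \<phi> h < e \<longrightarrow> P h" for e P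
  proof -
    have "e / sqrt ?n > 0" using e sn by simp
    then have ev: "eventually (\<lambda>\<epsilon>. \<epsilon> \<in> {0<..<e / sqrt ?n}) (at_right 0)"
      by (rule eventually_at_right_real)
    show ?thesis
    proof (rule eventually_mono[OF ev], intro ballI)
      fix \<epsilon> h assume \<epsilon>: "\<epsilon> \<in> {0<..<e / sqrt ?n}" and h: "h \<in> Knbhd K x w \<epsilon>"
      then have "h \<in> K" "\<phi> h / sqrt ?n < e / sqrt ?n" using nb by force+
      then have "\<phi> h < e" using sn by (simp add: divide_strict_right_mono_neg divide_less_cancel)
      then show "P h" using P \<open>h \<in> K\<close> by blast
    qed
  qed
  show ?thesis
  proof (cases "Kfib K x w = {}")
    case True
    have \<psi>0: "continuous_map (subtopology (mtopology_of ?M) K) euclideanreal (\<lambda>h. 0)" by simp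
    have pr0: "(\<lambda>h. 0::real) h < 0" if "h \<in> K" "\<phi> h \<le> 0" for h
      using that fb True by blast
    have "\<exists>e>0. \<forall>h\<in>K. \<phi> h < e \<longrightarrow> (\<lambda>_. 0::real) h < 0"
      by (rule keyG[OF Kcpt \<phi>c \<psi>0]) (use pr0 in auto)
    then obtain e where e: "e > 0" "\<forall>h\<in>K. \<phi> h < e \<longrightarrow> (\<lambda>_. 0::real) h < 0"
      by blast
    have "eventually (\<lambda>\<epsilon>. \<forall>h\<in>Knbhd K x w \<epsilon>. False) (at_right 0)"
      using small[OF e(1), of "\<lambda>_. False"] e(2) by simp
    then have "eventually (\<lambda>\<epsilon>. cheb_radius (J ` Knbhd K x w \<epsilon>) = cheb_radius (J ` Kfib K x w)) (at_right 0)"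
      by (rule eventually_mono) (use True in auto)
    then show ?thesis by (rule tendsto_eventually)
  next
    case False
    let ?L = "cheb_radius (J ` Kfib K x w)"
    have JFne: "J ` Kfib K x w \<noteq> {}" using False by blast
    show ?thesis
    proof (rule order_tendstoI)
      fix a assume a: "a < ?L"
      have "eventually (\<lambda>\<epsilon>. \<epsilon> \<in> {0<..<1}) (at_right (0::real))"
        by (rule eventually_at_right_real) simp
      then show "eventually (\<lambda>\<epsilon>. a < cheb_radius (J ` Knbhd K x w \<epsilon>)) (at_right 0)"
      proof (rule eventually_mono)
        fix \<epsilon> :: real assume "\<epsilon> \<in> {0<..<1}"
        then have "Kfib K x w \<subseteq> Knbhd K x w \<epsilon>" using sub by simp
        then have "J ` Kfib K x w \<subseteq> J ` Knbhd K x w \<epsilon>" by (rule image_mono)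
        then have "?L \<le> cheb_radius (J ` Knbhd K x w \<epsilon>)"
          by (rule cheb_mono[OF JFne bounded_subset[OF bJK image_mono[OF subK]]])
        then show "a < cheb_radius (J ` Knbhd K x w \<epsilon>)" using a by linarith
      qed
    next
      fix a assume a: "?L < a"
      define c where "c = (?L + a) / 2"
      have "?L < c" "c < a" using a by (auto simp: c_def)
      have bJF: "bounded (J ` Kfib K x w)"
        by (rule bounded_subset[OF bJK], rule image_mono) (use fb in blast)
      obtain z where z: "J ` Kfib K x w \<subseteq> ball z c"
        using cheb_lt[OF JFne bJF \<open>?L < c\<close>] by blast
      have \<psi>c: "continuous_map (subtopology (mtopology_of ?M) K) euclideanreal (\<lambda>h. dist z (J h))"
      proof (rule lip_cont[OF KM, where B="\<bar>CX\<bar>"])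
        fix f g assume fg: "f \<in> K" "g \<in> K"
        have "dist (dist z (J f)) (dist z (J g)) = \<bar>norm (z - J f) - norm (z - J g)\<bar>"
          by (simp add: dist_real_def dist_norm)
        also have "\<dots> \<le> norm ((z - J f) - (z - J g))" by (rule norm_triangle_ineq3)
        also have "\<dots> = dist (J f) (J g)" by (simp add: dist_norm norm_minus_commute)
        also have "\<dots> \<le> \<bar>CX\<bar> * mdist ?M f g" using fg assms(9) by (intro Jd) auto
        finally show "dist (dist z (J f)) (dist z (J g)) \<le> \<bar>CX\<bar> * mdist ?M f g" .
      qed
      have prc: "dist z (J h) < c" if "h \<in> K" "\<phi> h \<le> 0" for h
      proof -
        have "h \<in> Kfib K x w" using that fb by blast
        then have "J h \<in> ball z c" using z by blast
        then show ?thesis by simp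
      qed
      have "\<exists>e>0. \<forall>h\<in>K. \<phi> h < e \<longrightarrow> dist z (J h) < c"
        by (rule keyG[OF Kcpt \<phi>c \<psi>c prc])
      then obtain e where e: "e > 0" "\<forall>h\<in>K. \<phi> h < e \<longrightarrow> dist z (J h) < c"
        by blast
      have "eventually (\<lambda>\<epsilon>. \<forall>h\<in>Knbhd K x w \<epsilon>. dist z (J h) < c) (at_right 0)"
        by (rule small[OF e(1) e(2)])
      moreover have "eventually (\<lambda>\<epsilon>. \<epsilon> \<in> {0<..<1}) (at_right (0::real))"
        by (rule eventually_at_right_real) simp
      ultimately show "eventually (\<lambda>\<epsilon>. cheb_radius (J ` Knbhd K x w \<epsilon>) < a) (at_right 0)"
      proof eventually_elim
        case (elim \<epsilon>)
        have "\<epsilon> \<ge> 0" using elim(2) by simp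
        then have "Kfib K x w \<subseteq> Knbhd K x w \<epsilon>" by (rule sub)
        then have ne: "J ` Knbhd K x w \<epsilon> \<noteq> {}" using False by blast
        have "J ` Knbhd K x w \<epsilon> \<subseteq> ball z c" using elim(1) by (auto simp: image_subset_iff)
        then have "cheb_radius (J ` Knbhd K x w \<epsilon>) \<le> c" by (rule cheb_le[OF ne])
        then show ?case using \<open>c < a\<close> by linarith
      qed
    qed
  qed
qed

end
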